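(* Let $E$ be a pseudo effect algebra satisfying (RDP). Then: (a) $(\mathcal J(E),\le^+)$ is an Abelian Dedekind complete $\ell$-group. (b) If $\{m_i\}_{i\in I}$ is a nonempty family in $\mathcal J(E)$ bounded above in $\mathcal J(E)$ and $d(x):=\sup_i m_i(x)$ for $x\in E$, then for every $x\in E$ $$\Big(\bigvee_i m_i\Big)(x)=\sup\{d(x_1)+\cdots+d(x_n):\ x=x_1+\cdots+x_n,\ x_1,\dots,x_n\in E,\ n\ge1\}.$$ (c) If $\{m_i\}_{i\in I}$ is a nonempty family in $\mathcal J(E)$ bounded below in $\mathcal J(E)$ and $e(x):=\inf_i m_i(x)$ for $x\in E$, then for every $x\in E$ $$\Big(\bigwedge_i m_i\Big)(x)=\inf\{e(x_1)+\cdots+e(x_n):\ x=x_1+\cdots+x_n,\ x_1,\dots,x_n\in E,\ n\ge1\}.$$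
   Context: Pseudo effect algebra: partial algebra $(E;+,0,1)$ such that for all $a,b,c$: (i) $a+b$ and $(a+b)+c$ exist iff $b+c$ and $a+(b+c)$ exist, and then they are equal; (ii) there is exactly one $d$ and one $e$ with $a+d=e+a=1$; (iii) if $a+b$ exists there are $d,e$ with $a+b=d+a=b+e$; (iv) if $1+a$ or $a+1$ exists then $a=0$. (RDP): whenever $a_1+a_2=b_1+b_2$ there are $d_1,\dots,d_4$ with $d_1+d_2=a_1$, $d_3+d_4=a_2$, $d_1+d_3=b_1$, $d_2+d_4=b_2$. A signed measure is $m:E\to\mathbb R$ with $m(a+b)=m(a)+m(b)$ whenever $a+b$ is defined; a measure is a nonnegative signed measure; $m_1\le^+m_2$ iff $m_2-m_1$ is a measure. $\mathcal J(E)$ is the set of Jordan signed measures, i.e. signed measures that are differences of two measures, with pointwise addition. Dedekind complete: every nonempty subset bounded above has a supremum (and bounded below has an infimum). *)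

theory Defs
  imports Complex_Main
begin

definition pea :: "'a set \<Rightarrow> ('a \<Rightarrow> 'a \<Rightarrow> 'a option) \<Rightarrow> 'a \<Rightarrow> 'a \<Rightarrow> bool" where
  "pea E op zero one \<longleftrightarrow>
     zero \<in> E \<and> one \<in> E \<and>
     (\<forall>a\<in>E. \<forall>b\<in>E. \<forall>c. op a b = Some c \<longrightarrow> c \<in> E) \<and>
     \<comment> \<open>(i) associativity: (a+b)+c defined iff a+(b+c) defined, and then equal\<close>
     (\<forall>a\<in>E. \<forall>b\<in>E. \<forall>c\<in>E.
        Option.bind (op a b) (\<lambda>ab. op ab c) = Option.bind (op b c) (\<lambda>bc. op a bc)) \<and>
     \<comment> \<open>(ii)\<close>
     (\<forall>a\<in>E. (\<exists>!d. d \<in> E \<and> op a d = Some one) \<and> (\<exists>!e. e \<in> E \<and> op e a = Some one)) \<and>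
     \<comment> \<open>(iii)\<close>
     (\<forall>a\<in>E. \<forall>b\<in>E. op a b \<noteq> None \<longrightarrow>
        (\<exists>d\<in>E. \<exists>e\<in>E. op a b = op d a \<and> op a b = op b e)) \<and>
     \<comment> \<open>(iv)\<close>
     (\<forall>a\<in>E. (op one a \<noteq> None \<or> op a one \<noteq> None) \<longrightarrow> a = zero)"

definition RDP :: "'a set \<Rightarrow> ('a \<Rightarrow> 'a \<Rightarrow> 'a option) \<Rightarrow> bool" where
  "RDP E op \<longleftrightarrow>
     (\<forall>a1\<in>E. \<forall>a2\<in>E. \<forall>b1\<in>E. \<forall>b2\<in>E.
        op a1 a2 \<noteq> None \<and> op a1 a2 = op b1 b2 \<longrightarrow>
        (\<exists>d1\<in>E. \<exists>d2\<in>E. \<exists>d3\<in>E. \<exists>d4\<in>E.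
           op d1 d2 = Some a1 \<and> op d3 d4 = Some a2 \<and>
           op d1 d3 = Some b1 \<and> op d2 d4 = Some b2))"

text \<open>Real-valued functions on E are represented as functions 'a \<Rightarrow> real
that vanish outside E (so that pointwise operations stay in the class).\<close>

definition signed_measure :: "'a set \<Rightarrow> ('a \<Rightarrow> 'a \<Rightarrow> 'a option) \<Rightarrow> ('a \<Rightarrow> real) \<Rightarrow> bool" where
  "signed_measure E op m \<longleftrightarrow>
     (\<forall>x. x \<notin> E \<longrightarrow> m x = 0) \<and>
     (\<forall>a\<in>E. \<forall>b\<in>E. \<forall>c. op a b = Some c \<longrightarrow> m c = m a + m b)"

definition is_measure :: "'a set \<Rightarrow> ('a \<Rightarrow> 'a \<Rightarrow> 'a option) \<Rightarrow> ('a \<Rightarrow> real) \<Rightarrow> bool" where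
  "is_measure E op m \<longleftrightarrow> signed_measure E op m \<and> (\<forall>x\<in>E. 0 \<le> m x)"

definition le_plus :: "'a set \<Rightarrow> ('a \<Rightarrow> 'a \<Rightarrow> 'a option) \<Rightarrow> ('a \<Rightarrow> real) \<Rightarrow> ('a \<Rightarrow> real) \<Rightarrow> bool" where
  "le_plus E op m1 m2 \<longleftrightarrow> is_measure E op (\<lambda>x. m2 x - m1 x)"

definition jordan :: "'a set \<Rightarrow> ('a \<Rightarrow> 'a \<Rightarrow> 'a option) \<Rightarrow> ('a \<Rightarrow> real) set" where
  "jordan E op = {m. signed_measure E op m \<and>
     (\<exists>m1 m2. is_measure E op m1 \<and> is_measure E op m2 \<and> (\<forall>x. m x = m1 x - m2 x))}"

definition is_lub_J :: "'a set \<Rightarrow> ('a \<Rightarrow> 'a \<Rightarrow> 'a option) \<Rightarrow> ('a \<Rightarrow> real) set \<Rightarrow> ('a \<Rightarrow> real) \<Rightarrow> bool" where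
  "is_lub_J E op S s \<longleftrightarrow> s \<in> jordan E op \<and> (\<forall>m\<in>S. le_plus E op m s) \<and>
     (\<forall>u\<in>jordan E op. (\<forall>m\<in>S. le_plus E op m u) \<longrightarrow> le_plus E op s u)"

definition is_glb_J :: "'a set \<Rightarrow> ('a \<Rightarrow> 'a \<Rightarrow> 'a option) \<Rightarrow> ('a \<Rightarrow> real) set \<Rightarrow> ('a \<Rightarrow> real) \<Rightarrow> bool" where
  "is_glb_J E op S s \<longleftrightarrow> s \<in> jordan E op \<and> (\<forall>m\<in>S. le_plus E op s m) \<and>
     (\<forall>u\<in>jordan E op. (\<forall>m\<in>S. le_plus E op u m) \<longrightarrow> le_plus E op u s)"

definition bdd_above_J :: "'a set \<Rightarrow> ('a \<Rightarrow> 'a \<Rightarrow> 'a option) \<Rightarrow> ('a \<Rightarrow> real) set \<Rightarrow> bool" where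
  "bdd_above_J E op S \<longleftrightarrow> (\<exists>u\<in>jordan E op. \<forall>m\<in>S. le_plus E op m u)"

definition bdd_below_J :: "'a set \<Rightarrow> ('a \<Rightarrow> 'a \<Rightarrow> 'a option) \<Rightarrow> ('a \<Rightarrow> real) set \<Rightarrow> bool" where
  "bdd_below_J E op S \<longleftrightarrow> (\<exists>u\<in>jordan E op. \<forall>m\<in>S. le_plus E op u m)"

text \<open>Iterated sum x1 + (x2 + (... + xn)) of a nonempty list (None if undefined);
by associativity the bracketing is irrelevant.\<close>

fun psum :: "('a \<Rightarrow> 'a \<Rightarrow> 'a option) \<Rightarrow> 'a list \<Rightarrow> 'a option" where
  "psum op [] = None"
| "psum op [a] = Some a"
| "psum op (a # b # xs) = Option.bind (psum op (b # xs)) (op a)"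

definition decomp_sums :: "'a set \<Rightarrow> ('a \<Rightarrow> 'a \<Rightarrow> 'a option) \<Rightarrow> ('a \<Rightarrow> real) \<Rightarrow> 'a \<Rightarrow> real set" where
  "decomp_sums E op d x = {(\<Sum>y\<leftarrow>xs. d y) | xs. xs \<noteq> [] \<and> set xs \<subseteq> E \<and> psum op xs = Some x}"

end

theory Submission imports Defs begin
lemma pea_clo: "pea E op z u1 \<Longrightarrow> a\<in>E \<Longrightarrow> b\<in>E \<Longrightarrow> op a b = Some c \<Longrightarrow> c\<in>E"
  unfolding pea_def by blast

lemma pea_assoc: "pea E op z u1 \<Longrightarrow> a\<in>E \<Longrightarrow> b\<in>E \<Longrightarrow> c\<in>E \<Longrightarrow>
   Option.bind (op a b) (\<lambda>ab. op ab c) = Option.bind (op b c) (\<lambda>bc. op a bc)"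
  unfolding pea_def by blast

lemma psum_Cons2: "xs \<noteq> [] \<Longrightarrow> psum op (a # xs) = Option.bind (psum op xs) (op a)"
  by (cases xs) auto

lemma psum_ne: "psum op xs = Some x \<Longrightarrow> xs \<noteq> []"
  by auto

lemma psum_ConsE:
  assumes "psum op (a # xs) = Some x" "xs \<noteq> []"
  obtains y where "psum op xs = Some y" "op a y = Some x"
proof -
  have "Option.bind (psum op xs) (op a) = Some x" using assms psum_Cons2[OF assms(2)] by simp
  then show ?thesis using that by (cases "psum op xs") auto
qed

lemma psum_in:
  assumes pea: "pea E op z u1"
  shows "set xs \<subseteq> E \<Longrightarrow> psum op xs = Some x \<Longrightarrow> x \<in> E"
proof (induction xs arbitrary: x)
  case Nil then show ?case by simp
next
  case (Cons a xs)
  show ?case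
  proof (cases "xs = []")
    case True with Cons show ?thesis by simp
  next
    case False
    obtain y where y: "psum op xs = Some y" "op a y = Some x"
      using psum_ConsE[OF Cons.prems(2) False] by blast
    have "y \<in> E" using Cons.IH Cons.prems(1) y(1) by simp
    then show ?thesis using pea_clo[OF pea _ _ y(2)] Cons.prems(1) by simp
  qed
qed

lemma sm_psum:
  assumes pea: "pea E op z u1" and sm: "signed_measure E op f"
  shows "set xs \<subseteq> E \<Longrightarrow> psum op xs = Some x \<Longrightarrow> f x = (\<Sum>y\<leftarrow>xs. f y)"
proof (induction xs arbitrary: x)
  case Nil then show ?case by simp
next
  case (Cons a xs)
  show ?case
  proof (cases "xs = []")
    case True with Cons show ?thesis by simp
  next
    case False
    obtain y where y: "psum op xs = Some y" "op a y = Some x"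
      using psum_ConsE[OF Cons.prems(2) False] by blast
    have yE: "y \<in> E" using psum_in[OF pea _ y(1)] Cons.prems(1) by simp
    have aE: "a \<in> E" using Cons.prems(1) by simp
    have "f x = f a + f y" using sm aE yE y(2) unfolding signed_measure_def by blast
    also have "f y = (\<Sum>y\<leftarrow>xs. f y)" using Cons.IH Cons.prems(1) y(1) by simp
    finally show ?thesis by simp
  qed
qed

lemma psum_append:
  assumes pea: "pea E op z u1"
  shows "set xs \<subseteq> E \<Longrightarrow> set ys \<subseteq> E \<Longrightarrow> psum op xs = Some a \<Longrightarrow> psum op ys = Some b
     \<Longrightarrow> op a b = Some c \<Longrightarrow> psum op (xs @ ys) = Some c"
proof (induction xs arbitrary: a c)
  case Nil then show ?case by simp
next
  case (Cons a' xs)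
  have yne: "ys \<noteq> []" using psum_ne[OF Cons.prems(4)] .
  show ?case
  proof (cases "xs = []")
    case True
    then have "a' = a" using Cons.prems(3) by simp
    then show ?thesis using True yne Cons.prems(4,5) psum_Cons2[OF yne, of op a'] by simp
  next
    case False
    obtain a'' where y: "psum op xs = Some a''" "op a' a'' = Some a"
      using psum_ConsE[OF Cons.prems(3) False] by blast
    have a''E: "a'' \<in> E" using psum_in[OF pea _ y(1)] Cons.prems(1) by simp
    have bE: "b \<in> E" using psum_in[OF pea Cons.prems(2,4)] .
    have a'E: "a' \<in> E" using Cons.prems(1) by simp
    have "Option.bind (op a' a'') (\<lambda>t. op t b) = Option.bind (op a'' b) (\<lambda>t. op a' t)"
      using pea_assoc[OF pea a'E a''E bE] .
    then have eq: "Option.bind (op a'' b) (\<lambda>t. op a' t) = Some c" using y(2) Cons.prems(5) by simp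
    then obtain c' where c': "op a'' b = Some c'" "op a' c' = Some c"
      by (cases "op a'' b") auto
    have "psum op (xs @ ys) = Some c'"
      using Cons.IH[OF _ Cons.prems(2) y(1) Cons.prems(4) c'(1)] Cons.prems(1) by simp
    moreover have "xs @ ys \<noteq> []" using False by simp
    ultimately show ?thesis using c'(2) psum_Cons2[of "xs @ ys" op a'] by simp
  qed
qed

lemma refine:
  assumes pea: "pea E op z u1" and rdp: "RDP E op"
  shows "set xs \<subseteq> E \<Longrightarrow> psum op xs = Some c \<Longrightarrow> a\<in>E \<Longrightarrow> b\<in>E \<Longrightarrow> op a b = Some c \<Longrightarrow>
    \<exists>ps. list_all2 (\<lambda>x p. fst p \<in> E \<and> snd p \<in> E \<and> op (fst p) (snd p) = Some x) xs ps
       \<and> psum op (map fst ps) = Some a \<and> psum op (map snd ps) = Some b"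
proof (induction xs arbitrary: c a b)
  case Nil then show ?case by simp
next
  case (Cons x xs)
  show ?case
  proof (cases "xs = []")
    case True
    then have "x = c" using Cons.prems(2) by simp
    then show ?thesis using True Cons.prems(3,4,5) by (intro exI[of _ "[(a,b)]"]) simp
  next
    case False
    obtain c' where y: "psum op xs = Some c'" "op x c' = Some c"
      using psum_ConsE[OF Cons.prems(2) False] by blast
    have c'E: "c' \<in> E" using psum_in[OF pea _ y(1)] Cons.prems(1) by simp
    have xE: "x \<in> E" using Cons.prems(1) by simp
    have "op x c' \<noteq> None \<and> op x c' = op a b" using y(2) Cons.prems(5) by simp
    then obtain d1 d2 d3 d4 where d: "d1\<in>E" "d2\<in>E" "d3\<in>E" "d4\<in>E"
      "op d1 d2 = Some x" "op d3 d4 = Some c'" "op d1 d3 = Some a" "op d2 d4 = Some b"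
      using rdp[unfolded RDP_def, rule_format, OF xE c'E Cons.prems(3,4)] by blast
    obtain ps where
      ps: "list_all2 (\<lambda>x p. fst p \<in> E \<and> snd p \<in> E \<and> op (fst p) (snd p) = Some x) xs ps"
        "psum op (map fst ps) = Some d3" "psum op (map snd ps) = Some d4"
      using Cons.IH[of c' d3 d4] Cons.prems(1) y(1) d(3,4,6) by auto
    have "ps \<noteq> []" using ps(1) False by (cases ps) auto
    then have ne: "map fst ps \<noteq> []" "map snd ps \<noteq> []" by simp_all
    have "list_all2 (\<lambda>x p. fst p \<in> E \<and> snd p \<in> E \<and> op (fst p) (snd p) = Some x) (x#xs) ((d1,d2)#ps)"
      using ps(1) d by simp
    moreover have "psum op (map fst ((d1,d2)#ps)) = Some a"
      using psum_Cons2[OF ne(1), of op d1] ps(2) d(7) by simp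
    moreover have "psum op (map snd ((d1,d2)#ps)) = Some b"
      using psum_Cons2[OF ne(2), of op d2] ps(3) d(8) by simp
    ultimately show ?thesis by blast
  qed
qed

lemma sum_split:
  assumes "list_all2 (\<lambda>x p. fst p \<in> E \<and> snd p \<in> E \<and> op (fst p) (snd p) = Some x) xs ps"
  and "\<And>x y z. y\<in>E \<Longrightarrow> z\<in>E \<Longrightarrow> op y z = Some x \<Longrightarrow> (g::'a\<Rightarrow>real) x \<le> g y + g z"
  shows "(\<Sum>x\<leftarrow>xs. g x) \<le> (\<Sum>y\<leftarrow>map fst ps. g y) + (\<Sum>y\<leftarrow>map snd ps. g y)"
  using assms(1)
proof (induction rule: list_all2_induct)
  case Nil then show ?case by simp
next
  case (Cons x xs p ps)
  have "g x \<le> g (fst p) + g (snd p)" using assms(2) Cons(1) by auto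
  with Cons.IH show ?case by simp
qed
lemma sm_out: "signed_measure E op m \<Longrightarrow> x \<notin> E \<Longrightarrow> m x = 0"
  by (simp add: signed_measure_def)
lemma jordan_sm: "m \<in> jordan E op \<Longrightarrow> signed_measure E op m"
  by (simp add: jordan_def)
lemma le_plus_le: "le_plus E op m u \<Longrightarrow> x \<in> E \<Longrightarrow> m x \<le> u x"
  by (simp add: le_plus_def is_measure_def)
lemma sm_add: "signed_measure E op f \<Longrightarrow> signed_measure E op g \<Longrightarrow> signed_measure E op (\<lambda>x. f x + g x)"
  unfolding signed_measure_def by auto
lemma sm_diff: "signed_measure E op f \<Longrightarrow> signed_measure E op g \<Longrightarrow> signed_measure E op (\<lambda>x. f x - g x)"
  unfolding signed_measure_def by auto
lemma sm_neg: "signed_measure E op f \<Longrightarrow> signed_measure E op (\<lambda>x. - f x)"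
  unfolding signed_measure_def by auto
lemma meas_add: "is_measure E op f \<Longrightarrow> is_measure E op g \<Longrightarrow> is_measure E op (\<lambda>x. f x + g x)"
  unfolding is_measure_def using sm_add by fastforce
lemma le_plus_I: "signed_measure E op m \<Longrightarrow> signed_measure E op u \<Longrightarrow> (\<And>x. x\<in>E \<Longrightarrow> m x \<le> u x)
   \<Longrightarrow> le_plus E op m u"
  unfolding le_plus_def is_measure_def using sm_diff by fastforce
lemma jordanI: "signed_measure E op f \<Longrightarrow> is_measure E op p \<Longrightarrow> is_measure E op q \<Longrightarrow>
   (\<And>x. f x = p x - q x) \<Longrightarrow> f \<in> jordan E op"
  unfolding jordan_def by blast

definition dsup :: "'i set \<Rightarrow> ('i \<Rightarrow> 'a \<Rightarrow> real) \<Rightarrow> 'a \<Rightarrow> real" where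
  "dsup I m y = (SUP i\<in>I. m i y)"
definition Dfun :: "'a set \<Rightarrow> ('a \<Rightarrow> 'a \<Rightarrow> 'a option) \<Rightarrow> 'i set \<Rightarrow> ('i \<Rightarrow> 'a \<Rightarrow> real) \<Rightarrow> 'a \<Rightarrow> real" where
  "Dfun E op I m x = (if x\<in>E then Sup (decomp_sums E op (dsup I m) x) else 0)"

lemma main_lub:
  assumes pea: "pea E op z u1" and rdp: "RDP E op" and Ine: "I \<noteq> {}" and mJ: "m ` I \<subseteq> jordan E op"
    and bdd: "bdd_above_J E op (m ` I)"
  shows "is_lub_J E op (m ` I) (Dfun E op I m)"
proof -
  from bdd obtain u where uJ: "u \<in> jordan E op" and ub: "\<forall>i\<in>I. le_plus E op (m i) u"
    unfolding bdd_above_J_def by auto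
  have msm: "signed_measure E op (m i)" if "i\<in>I" for i using mJ that jordan_sm by auto
  have usm: "signed_measure E op u" using uJ jordan_sm by auto
  have bddi: "bdd_above ((\<lambda>i. m i y) ` I)" if "y\<in>E" for y
    using ub le_plus_le[of E op _ u y] that by (intro bdd_aboveI2[where M="u y"]) auto
  have m_le_d: "m i y \<le> dsup I m y" if "i\<in>I" "y\<in>E" for i y
    unfolding dsup_def using cSUP_upper[OF that(1) bddi[OF that(2)]] .
  have d_le: "dsup I m y \<le> w y" if "\<forall>i\<in>I. le_plus E op (m i) w" "y\<in>E" for w y
    unfolding dsup_def using Ine that le_plus_le[of E op _ w y] by (auto intro!: cSUP_least)
  have d_sub: "dsup I m x \<le> dsup I m y + dsup I m z" if yz: "y\<in>E" "z\<in>E" "op y z = Some x" for x y z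
  proof -
    have "m i x \<le> dsup I m y + dsup I m z" if "i\<in>I" for i
    proof -
      have "m i x = m i y + m i z" using msm[OF that] yz unfolding signed_measure_def by auto
      also have "\<dots> \<le> dsup I m y + dsup I m z" using m_le_d that yz by (intro add_mono) auto
      finally show ?thesis .
    qed
    then show ?thesis unfolding dsup_def[of I m x] using Ine by (auto intro!: cSUP_least)
  qed
  have DS_mem: "\<gamma> \<in> decomp_sums E op (dsup I m) x \<longleftrightarrow>
     (\<exists>xs. \<gamma> = (\<Sum>y\<leftarrow>xs. dsup I m y) \<and> xs \<noteq> [] \<and> set xs \<subseteq> E \<and> psum op xs = Some x)" for \<gamma> x
    unfolding decomp_sums_def by blast
  have DS_ne: "dsup I m x \<in> decomp_sums E op (dsup I m) x" if "x\<in>E" for x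
    using that unfolding DS_mem by (intro exI[of _ "[x]"]) auto
  have DS_bd: "\<gamma> \<le> w x" if mem: "\<gamma> \<in> decomp_sums E op (dsup I m) x" "signed_measure E op w"
      "\<forall>i\<in>I. le_plus E op (m i) w" for \<gamma> x w
  proof -
    obtain xs where xs: "\<gamma> = (\<Sum>y\<leftarrow>xs. dsup I m y)" "set xs \<subseteq> E" "psum op xs = Some x"
      using mem DS_mem by auto
    have "\<gamma> \<le> (\<Sum>y\<leftarrow>xs. w y)" unfolding xs(1) by (rule sum_list_mono) (use xs(2) d_le that(3) in auto)
    also have "\<dots> = w x" using sm_psum[OF pea that(2) xs(2,3)] by simp
    finally show ?thesis .
  qed
  have DS_bdd: "bdd_above (decomp_sums E op (dsup I m) x)" for x
    using DS_bd[OF _ usm ub, of _ x] by (intro bdd_aboveI[where M="u x"]) auto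
  define D where "D = Dfun E op I m"
  have D_ge: "dsup I m x \<le> D x" if "x\<in>E" for x
    using cSup_upper[OF DS_ne[OF that] DS_bdd] that unfolding D_def Dfun_def by simp
  have D_le: "D x \<le> w x" if "x\<in>E" "signed_measure E op w" "\<forall>i\<in>I. le_plus E op (m i) w" for x w
  proof -
    have "Sup (decomp_sums E op (dsup I m) x) \<le> w x"
      using DS_ne[OF that(1)] DS_bd[OF _ that(2,3)] by (intro cSup_least) auto
    then show ?thesis using that unfolding D_def Dfun_def by simp
  qed
  have D_add: "D c = D a + D b" if ab: "a\<in>E" "b\<in>E" "op a b = Some c" for a b c
  proof -
    have cE: "c\<in>E" using pea_clo[OF pea ab] .
    let ?S = "\<lambda>x. decomp_sums E op (dsup I m) x"
    have ge: "Sup (?S a) + Sup (?S b) \<le> Sup (?S c)"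
    proof -
      have 1: "\<alpha> + \<beta> \<le> Sup (?S c)" if mem: "\<alpha> \<in> ?S a" "\<beta> \<in> ?S b" for \<alpha> \<beta>
      proof -
        obtain xs where xs: "\<alpha> = (\<Sum>y\<leftarrow>xs. dsup I m y)" "xs \<noteq> []" "set xs \<subseteq> E" "psum op xs = Some a"
          using mem(1) DS_mem by auto
        obtain ys where ys: "\<beta> = (\<Sum>y\<leftarrow>ys. dsup I m y)" "ys \<noteq> []" "set ys \<subseteq> E" "psum op ys = Some b"
          using mem(2) DS_mem by auto
        have "psum op (xs@ys) = Some c" using psum_append[OF pea xs(3) ys(3) xs(4) ys(4) ab(3)] .
        hence "\<alpha>+\<beta> \<in> ?S c" unfolding DS_mem using xs ys by (intro exI[of _ "xs@ys"]) auto
        then show ?thesis by (rule cSup_upper[OF _ DS_bdd])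
      qed
      have 2: "Sup (?S a) \<le> Sup (?S c) - \<beta>" if "\<beta> \<in> ?S b" for \<beta>
        using that DS_ne[OF ab(1)] 1 by (intro cSup_least) force+
      have "Sup (?S b) \<le> Sup (?S c) - Sup (?S a)"
        using DS_ne[OF ab(2)] 2 by (intro cSup_least) force+
      thus ?thesis by simp
    qed
    have le: "Sup (?S c) \<le> Sup (?S a) + Sup (?S b)"
    proof (rule cSup_least)
      show "?S c \<noteq> {}" using DS_ne[OF cE] by auto
      fix \<gamma> assume "\<gamma> \<in> ?S c"
      then obtain xs where xs: "\<gamma> = (\<Sum>y\<leftarrow>xs. dsup I m y)" "xs \<noteq> []" "set xs \<subseteq> E" "psum op xs = Some c"
        using DS_mem by auto
      obtain ps where ps: "list_all2 (\<lambda>x p. fst p \<in> E \<and> snd p \<in> E \<and> op (fst p) (snd p) = Some x) xs ps"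
        "psum op (map fst ps) = Some a" "psum op (map snd ps) = Some b"
        using refine[OF pea rdp xs(3,4) ab] by blast
      have "\<gamma> \<le> (\<Sum>y\<leftarrow>map fst ps. dsup I m y) + (\<Sum>y\<leftarrow>map snd ps. dsup I m y)"
        unfolding xs(1) using sum_split[OF ps(1), of "dsup I m"] d_sub by blast
      also have "\<dots> \<le> Sup (?S a) + Sup (?S b)"
      proof (intro add_mono cSup_upper[OF _ DS_bdd])
        have pE: "\<forall>p\<in>set ps. fst p \<in> E \<and> snd p \<in> E"
          using ps(1) unfolding list_all2_conv_all_nth by (metis in_set_conv_nth)
        have sE: "set (map fst ps) \<subseteq> E" "set (map snd ps) \<subseteq> E"
          using pE by auto
        show "(\<Sum>y\<leftarrow>map fst ps. dsup I m y) \<in> ?S a"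
          unfolding DS_mem using sE ps(2) psum_ne[OF ps(2)] by blast
        show "(\<Sum>y\<leftarrow>map snd ps. dsup I m y) \<in> ?S b"
          unfolding DS_mem using sE ps(3) psum_ne[OF ps(3)] by blast
      qed
      finally show "\<gamma> \<le> Sup (?S a) + Sup (?S b)" .
    qed
    from ge le have "Sup (?S c) = Sup (?S a) + Sup (?S b)" by linarith
    then show ?thesis unfolding D_def Dfun_def using ab cE by simp
  qed
  have D_sm: "signed_measure E op D"
    unfolding signed_measure_def
  proof (intro conjI allI ballI impI)
    show "D x = 0" if "x \<notin> E" for x using that by (simp add: D_def Dfun_def)
    show "D c = D a + D b" if "a\<in>E" "b\<in>E" "op a b = Some c" for a b c using D_add that by blast
  qed
  obtain i0 where i0: "i0 \<in> I" using Ine by auto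
  obtain p q where pq: "is_measure E op p" "is_measure E op q" "\<And>x. m i0 x = p x - q x"
    using mJ i0 unfolding jordan_def by auto
  have DJ: "D \<in> jordan E op"
  proof (rule jordanI[OF D_sm _ pq(2)])
    show "is_measure E op (\<lambda>x. (D x - m i0 x) + p x)"
    proof (rule meas_add[OF _ pq(1)])
      show "is_measure E op (\<lambda>x. D x - m i0 x)"
        unfolding is_measure_def using sm_diff[OF D_sm msm[OF i0]] D_ge m_le_d[OF i0]
        by (smt (verit))
    qed
    show "D x = D x - m i0 x + p x - q x" for x using pq(3)[of x] by simp
  qed
  show ?thesis
    unfolding is_lub_J_def D_def[symmetric]
  proof (intro conjI ballI impI)
    show "D \<in> jordan E op" by (rule DJ)
    show "le_plus E op f D" if fmem: "f \<in> m ` I" for f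
    proof -
      obtain i where i: "i \<in> I" "f = m i" using fmem by auto
      have "m i x \<le> D x" if "x \<in> E" for x using m_le_d[OF i(1) that] D_ge[OF that] by linarith
      then show ?thesis using i msm by (auto intro!: le_plus_I[OF _ D_sm])
    qed
    show "le_plus E op D w" if "w \<in> jordan E op" "\<forall>f\<in>m ` I. le_plus E op f w" for w
      using that by (intro le_plus_I[OF D_sm]) (auto intro!: D_le jordan_sm)
  qed
qed
lemma is_measure_zero: "is_measure E op (\<lambda>x. 0)"
  by (simp add: is_measure_def signed_measure_def)

lemma le_plus_antisym: assumes "le_plus E op a b" "le_plus E op b a" shows "a = b"
proof (rule ext)
  fix x
  show "a x = b x"
  proof (cases "x\<in>E")
    case True then show ?thesis using le_plus_le[OF assms(1) True] le_plus_le[OF assms(2) True] by simp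
  next
    case False then have "b x - a x = 0" using assms(1) unfolding le_plus_def is_measure_def signed_measure_def by auto
    then show ?thesis by simp
  qed
qed

lemma fun_eq_le_plus: "(\<lambda>x. f x) = (\<lambda>x. g x) \<Longrightarrow> is_measure E op f \<Longrightarrow> is_measure E op g"
  by simp

lemma le_plus_trans: assumes "le_plus E op a b" "le_plus E op b c" shows "le_plus E op a c"
proof -
  have "is_measure E op (\<lambda>x. (c x - b x) + (b x - a x))"
    by (rule meas_add) (use assms in \<open>simp_all add: le_plus_def\<close>)
  moreover have "(\<lambda>x. (c x - b x) + (b x - a x)) = (\<lambda>x. c x - a x)" by auto
  ultimately show ?thesis by (simp add: le_plus_def)
qed

lemma le_plus_refl: "le_plus E op a a"
  by (simp add: le_plus_def is_measure_zero)

lemma le_plus_neg: "le_plus E op (\<lambda>x. - a x) (\<lambda>x. - b x) = le_plus E op b a"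
proof -
  have "(\<lambda>x. - b x - - a x) = (\<lambda>x. a x - b x)" by auto
  then show ?thesis by (simp add: le_plus_def)
qed

lemma le_plus_negL: "le_plus E op (\<lambda>x. - a x) b = le_plus E op (\<lambda>x. - b x) a"
proof -
  have "(\<lambda>x. b x - - a x) = (\<lambda>x. a x - - b x)" by auto
  then show ?thesis by (simp add: le_plus_def)
qed

lemma le_plus_negR: "le_plus E op a (\<lambda>x. - b x) = le_plus E op b (\<lambda>x. - a x)"
proof -
  have "(\<lambda>x. - b x - a x) = (\<lambda>x. - a x - b x)" by auto
  then show ?thesis by (simp add: le_plus_def)
qed

lemma le_plus_transl: assumes "le_plus E op m1 m2" shows "le_plus E op (\<lambda>x. m1 x + m3 x) (\<lambda>x. m2 x + m3 x)"
proof -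
  have "(\<lambda>x. (m2 x + m3 x) - (m1 x + m3 x)) = (\<lambda>x. m2 x - m1 x)" by auto
  then show ?thesis using assms by (simp add: le_plus_def)
qed

lemma jordan_zero: "(\<lambda>x. 0) \<in> jordan E op"
  by (rule jordanI[OF _ is_measure_zero is_measure_zero]) (auto simp: signed_measure_def)

lemma jordan_add: assumes "m1 \<in> jordan E op" "m2 \<in> jordan E op" shows "(\<lambda>x. m1 x + m2 x) \<in> jordan E op"
proof -
  obtain p1 q1 where 1: "is_measure E op p1" "is_measure E op q1" "\<And>x. m1 x = p1 x - q1 x"
    using assms(1) unfolding jordan_def by auto
  obtain p2 q2 where 2: "is_measure E op p2" "is_measure E op q2" "\<And>x. m2 x = p2 x - q2 x"
    using assms(2) unfolding jordan_def by auto
  show ?thesis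
    by (rule jordanI[OF sm_add[OF jordan_sm[OF assms(1)] jordan_sm[OF assms(2)]]
          meas_add[OF 1(1) 2(1)] meas_add[OF 1(2) 2(2)]]) (simp add: 1(3) 2(3))
qed

lemma jordan_neg: assumes "m \<in> jordan E op" shows "(\<lambda>x. - m x) \<in> jordan E op"
proof -
  obtain p q where 1: "is_measure E op p" "is_measure E op q" "\<And>x. m x = p x - q x"
    using assms(1) unfolding jordan_def by auto
  show ?thesis
    by (rule jordanI[OF sm_neg[OF jordan_sm[OF assms(1)]] 1(2) 1(1)]) (simp add: 1(3))
qed

lemma lub_unique: assumes "is_lub_J E op S s" "is_lub_J E op S s'" shows "s = s'"
proof -
  have 1: "s \<in> jordan E op" "\<forall>m\<in>S. le_plus E op m s"
    "\<And>u. u\<in>jordan E op \<Longrightarrow> \<forall>m\<in>S. le_plus E op m u \<Longrightarrow> le_plus E op s u"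
    using assms(1) unfolding is_lub_J_def by auto
  have 2: "s' \<in> jordan E op" "\<forall>m\<in>S. le_plus E op m s'"
    "\<And>u. u\<in>jordan E op \<Longrightarrow> \<forall>m\<in>S. le_plus E op m u \<Longrightarrow> le_plus E op s' u"
    using assms(2) unfolding is_lub_J_def by auto
  show ?thesis using 1(3)[OF 2(1,2)] 2(3)[OF 1(1,2)] by (rule le_plus_antisym)
qed

lemma lub_neg_glb: assumes "S \<subseteq> jordan E op" "is_lub_J E op ((\<lambda>f x. - f x) ` S) s"
  shows "is_glb_J E op S (\<lambda>x. - s x)"
proof -
  have 1: "s \<in> jordan E op" "\<And>f. f \<in> S \<Longrightarrow> le_plus E op (\<lambda>x. - f x) s"
    "\<And>u. u\<in>jordan E op \<Longrightarrow> \<forall>m\<in>(\<lambda>f x. - f x) ` S. le_plus E op m u \<Longrightarrow> le_plus E op s u"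
    using assms(2) unfolding is_lub_J_def by auto
  have a: "(\<lambda>x. - s x) \<in> jordan E op" using jordan_neg[OF 1(1)] .
  have b: "\<forall>f\<in>S. le_plus E op (\<lambda>x. - s x) f" using 1(2) le_plus_negL by blast
  have c: "le_plus E op u (\<lambda>x. - s x)" if u: "u \<in> jordan E op" "\<forall>f\<in>S. le_plus E op u f" for u
  proof -
    have "\<forall>m\<in>(\<lambda>f x. - f x) ` S. le_plus E op m (\<lambda>x. - u x)"
      using u(2) le_plus_neg by fastforce
    then have "le_plus E op s (\<lambda>x. - u x)" using 1(3)[OF jordan_neg[OF u(1)]] by blast
    then show ?thesis using le_plus_negR by blast
  qed
  show ?thesis unfolding is_glb_J_def using a b c by blast
qed

lemma glb_neg_lub: assumes "is_glb_J E op S t"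
  shows "is_lub_J E op ((\<lambda>f x. - f x) ` S) (\<lambda>x. - t x)"
proof -
  have 1: "t \<in> jordan E op" "\<And>f. f \<in> S \<Longrightarrow> le_plus E op t f"
    "\<And>u. u\<in>jordan E op \<Longrightarrow> \<forall>m\<in>S. le_plus E op u m \<Longrightarrow> le_plus E op u t"
    using assms unfolding is_glb_J_def by auto
  have a: "(\<lambda>x. - t x) \<in> jordan E op" using jordan_neg[OF 1(1)] .
  have b: "\<forall>g\<in>(\<lambda>f x. - f x) ` S. le_plus E op g (\<lambda>x. - t x)"
    using 1(2) le_plus_neg by fastforce
  have c: "le_plus E op (\<lambda>x. - t x) u" if u: "u \<in> jordan E op" "\<forall>g\<in>(\<lambda>f x. - f x) ` S. le_plus E op g u" for u
  proof -
    have "\<forall>f\<in>S. le_plus E op (\<lambda>x. - u x) f" using u(2) le_plus_negL by fastforce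
    then have "le_plus E op (\<lambda>x. - u x) t" using 1(3)[OF jordan_neg[OF u(1)]] by blast
    then show ?thesis using le_plus_negL by blast
  qed
  show ?thesis unfolding is_lub_J_def using a b c by blast
qed

lemma sum_list_neg: "(\<Sum>y\<leftarrow>xs. - (g y::real)) = - (\<Sum>y\<leftarrow>xs. g y)"
  by (induction xs) auto

lemma decomp_neg: "decomp_sums E op (\<lambda>y. - g y) x = uminus ` decomp_sums E op g x"
  unfolding decomp_sums_def by (auto simp: sum_list_neg image_iff)

lemma Inf_neg: "Inf (uminus ` (X::real set)) = - Sup X"
  by (simp add: Inf_real_def image_image)
theorem theorem3p5:
  fixes E :: "'a set" and op :: "'a \<Rightarrow> 'a \<Rightarrow> 'a option" and zero one :: 'a
  assumes "pea E op zero one" and "RDP E op"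
  shows
   \<comment> \<open>(a) J(E) is an Abelian po-group under pointwise addition and le_plus\<close>
   "((\<lambda>x. 0) \<in> jordan E op \<and>
     (\<forall>m1\<in>jordan E op. \<forall>m2\<in>jordan E op. (\<lambda>x. m1 x + m2 x) \<in> jordan E op) \<and>
     (\<forall>m\<in>jordan E op. (\<lambda>x. - m x) \<in> jordan E op) \<and>
     (\<forall>m\<in>jordan E op. le_plus E op m m) \<and>
     (\<forall>m1\<in>jordan E op. \<forall>m2\<in>jordan E op.
        le_plus E op m1 m2 \<and> le_plus E op m2 m1 \<longrightarrow> m1 = m2) \<and>
     (\<forall>m1\<in>jordan E op. \<forall>m2\<in>jordan E op. \<forall>m3\<in>jordan E op.
        le_plus E op m1 m2 \<and> le_plus E op m2 m3 \<longrightarrow> le_plus E op m1 m3) \<and>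
     (\<forall>m1\<in>jordan E op. \<forall>m2\<in>jordan E op. \<forall>m3\<in>jordan E op.
        le_plus E op m1 m2 \<longrightarrow> le_plus E op (\<lambda>x. m1 x + m3 x) (\<lambda>x. m2 x + m3 x)) \<and>
     \<comment> \<open>lattice-ordered\<close>
     (\<forall>m1\<in>jordan E op. \<forall>m2\<in>jordan E op.
        (\<exists>s. is_lub_J E op {m1, m2} s) \<and> (\<exists>t. is_glb_J E op {m1, m2} t)) \<and>
     \<comment> \<open>Dedekind complete\<close>
     (\<forall>S. S \<subseteq> jordan E op \<and> S \<noteq> {} \<and> bdd_above_J E op S \<longrightarrow> (\<exists>s. is_lub_J E op S s)) \<and>
     (\<forall>S. S \<subseteq> jordan E op \<and> S \<noteq> {} \<and> bdd_below_J E op S \<longrightarrow> (\<exists>s. is_glb_J E op S s)))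
   \<and>
   \<comment> \<open>(b)\<close>
   (\<forall>(I :: 'i set) (m :: 'i \<Rightarrow> 'a \<Rightarrow> real) s.
      I \<noteq> {} \<and> m ` I \<subseteq> jordan E op \<and> bdd_above_J E op (m ` I) \<and> is_lub_J E op (m ` I) s \<longrightarrow>
      (\<forall>x\<in>E. s x = Sup (decomp_sums E op (\<lambda>y. SUP i\<in>I. m i y) x)))
   \<and>
   \<comment> \<open>(c)\<close>
   (\<forall>(I :: 'i set) (m :: 'i \<Rightarrow> 'a \<Rightarrow> real) t.
      I \<noteq> {} \<and> m ` I \<subseteq> jordan E op \<and> bdd_below_J E op (m ` I) \<and> is_glb_J E op (m ` I) t \<longrightarrow>
      (\<forall>x\<in>E. t x = Inf (decomp_sums E op (\<lambda>y. INF i\<in>I. m i y) x)))"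
proof -
  note pea = assms(1) and rdp = assms(2)
  have ded_sup: "\<forall>S. S \<subseteq> jordan E op \<and> S \<noteq> {} \<and> bdd_above_J E op S \<longrightarrow> (\<exists>s. is_lub_J E op S s)"
  proof (intro allI impI)
    fix S assume S: "S \<subseteq> jordan E op \<and> S \<noteq> {} \<and> bdd_above_J E op S"
    have "is_lub_J E op ((\<lambda>f. f) ` S) (Dfun E op S (\<lambda>f. f))"
      by (rule main_lub[OF pea rdp]) (use S in auto)
    then show "\<exists>s. is_lub_J E op S s" by auto
  qed
  have ded_inf: "\<forall>S. S \<subseteq> jordan E op \<and> S \<noteq> {} \<and> bdd_below_J E op S \<longrightarrow> (\<exists>s. is_glb_J E op S s)"
  proof (intro allI impI)
    fix S assume S: "S \<subseteq> jordan E op \<and> S \<noteq> {} \<and> bdd_below_J E op S"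
    then obtain u where u: "u \<in> jordan E op" "\<forall>f\<in>S. le_plus E op u f" unfolding bdd_below_J_def by auto
    have "bdd_above_J E op ((\<lambda>f x. - f x) ` S)"
      unfolding bdd_above_J_def using jordan_neg[OF u(1)] u(2)
      by (intro bexI[where x="\<lambda>x. - u x"]) (simp_all add: le_plus_neg)
    then have "is_lub_J E op ((\<lambda>f x. - f x) ` S) (Dfun E op S (\<lambda>f x. - f x))"
      by (intro main_lub[OF pea rdp]) (use S jordan_neg in auto)
    then show "\<exists>s. is_glb_J E op S s" using lub_neg_glb S by blast
  qed
  have latt: "(\<exists>s. is_lub_J E op {m1, m2} s) \<and> (\<exists>t. is_glb_J E op {m1, m2} t)"
    if J: "m1 \<in> jordan E op" "m2 \<in> jordan E op" for m1 m2
  proof -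
    obtain p1 q1 where 1: "is_measure E op p1" "is_measure E op q1" "\<And>x. m1 x = p1 x - q1 x"
      using J(1) unfolding jordan_def by auto
    obtain p2 q2 where 2: "is_measure E op p2" "is_measure E op q2" "\<And>x. m2 x = p2 x - q2 x"
      using J(2) unfolding jordan_def by auto
    have sm: "signed_measure E op p1" "signed_measure E op p2" "signed_measure E op q1" "signed_measure E op q2"
      and nn: "\<And>x. x\<in>E \<Longrightarrow> p1 x \<ge> 0 \<and> p2 x \<ge> 0 \<and> q1 x \<ge> 0 \<and> q2 x \<ge> 0"
      using 1 2 unfolding is_measure_def by auto
    have uJ: "(\<lambda>x. p1 x + p2 x) \<in> jordan E op"
      by (rule jordanI[OF sm_add[OF sm(1,2)] meas_add[OF 1(1) 2(1)] is_measure_zero]) simp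
    have lJ: "(\<lambda>x. - (q1 x + q2 x)) \<in> jordan E op"
      by (rule jordanI[OF sm_neg[OF sm_add[OF sm(3,4)]] is_measure_zero meas_add[OF 1(2) 2(2)]]) simp
    have up: "le_plus E op m (\<lambda>x. p1 x + p2 x)" if "m \<in> {m1, m2}" for m
    proof -
      have "m x \<le> p1 x + p2 x" if "x \<in> E" for x using nn[OF that] \<open>m \<in> {m1, m2}\<close> 1(3)[of x] 2(3)[of x] by auto
      then show ?thesis using le_plus_I[OF jordan_sm jordan_sm[OF uJ]] J \<open>m \<in> {m1, m2}\<close> by blast
    qed
    have lo: "le_plus E op (\<lambda>x. - (q1 x + q2 x)) m" if "m \<in> {m1, m2}" for m
    proof -
      have "- (q1 x + q2 x) \<le> m x" if "x \<in> E" for x using nn[OF that] \<open>m \<in> {m1, m2}\<close> 1(3)[of x] 2(3)[of x] by auto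
      then show ?thesis using le_plus_I[OF jordan_sm[OF lJ] jordan_sm] J \<open>m \<in> {m1, m2}\<close> by blast
    qed
    have "bdd_above_J E op {m1, m2}"
      unfolding bdd_above_J_def using uJ up by blast
    moreover have "bdd_below_J E op {m1, m2}"
      unfolding bdd_below_J_def using lJ lo by blast
    ultimately show ?thesis using ded_sup ded_inf J by auto
  qed
  have partA: "((\<lambda>x. 0) \<in> jordan E op \<and>
     (\<forall>m1\<in>jordan E op. \<forall>m2\<in>jordan E op. (\<lambda>x. m1 x + m2 x) \<in> jordan E op) \<and>
     (\<forall>m\<in>jordan E op. (\<lambda>x. - m x) \<in> jordan E op) \<and>
     (\<forall>m\<in>jordan E op. le_plus E op m m) \<and>
     (\<forall>m1\<in>jordan E op. \<forall>m2\<in>jordan E op.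
        le_plus E op m1 m2 \<and> le_plus E op m2 m1 \<longrightarrow> m1 = m2) \<and>
     (\<forall>m1\<in>jordan E op. \<forall>m2\<in>jordan E op. \<forall>m3\<in>jordan E op.
        le_plus E op m1 m2 \<and> le_plus E op m2 m3 \<longrightarrow> le_plus E op m1 m3) \<and>
     (\<forall>m1\<in>jordan E op. \<forall>m2\<in>jordan E op. \<forall>m3\<in>jordan E op.
        le_plus E op m1 m2 \<longrightarrow> le_plus E op (\<lambda>x. m1 x + m3 x) (\<lambda>x. m2 x + m3 x)) \<and>
     (\<forall>m1\<in>jordan E op. \<forall>m2\<in>jordan E op.
        (\<exists>s. is_lub_J E op {m1, m2} s) \<and> (\<exists>t. is_glb_J E op {m1, m2} t)) \<and>
     (\<forall>S. S \<subseteq> jordan E op \<and> S \<noteq> {} \<and> bdd_above_J E op S \<longrightarrow> (\<exists>s. is_lub_J E op S s)) \<and>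
     (\<forall>S. S \<subseteq> jordan E op \<and> S \<noteq> {} \<and> bdd_below_J E op S \<longrightarrow> (\<exists>s. is_glb_J E op S s)))"
  proof (intro conjI)
    show "(\<lambda>x. 0) \<in> jordan E op" by (rule jordan_zero)
    show "\<forall>m1\<in>jordan E op. \<forall>m2\<in>jordan E op. (\<lambda>x. m1 x + m2 x) \<in> jordan E op"
      using jordan_add by blast
    show "\<forall>m\<in>jordan E op. (\<lambda>x. - m x) \<in> jordan E op" using jordan_neg by blast
    show "\<forall>m\<in>jordan E op. le_plus E op m m" using le_plus_refl by blast
    show "\<forall>m1\<in>jordan E op. \<forall>m2\<in>jordan E op.
        le_plus E op m1 m2 \<and> le_plus E op m2 m1 \<longrightarrow> m1 = m2" using le_plus_antisym by blast
    show "\<forall>m1\<in>jordan E op. \<forall>m2\<in>jordan E op. \<forall>m3\<in>jordan E op.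
        le_plus E op m1 m2 \<and> le_plus E op m2 m3 \<longrightarrow> le_plus E op m1 m3"
      by (intro ballI impI) (erule conjE, erule (1) le_plus_trans)
    show "\<forall>m1\<in>jordan E op. \<forall>m2\<in>jordan E op. \<forall>m3\<in>jordan E op.
        le_plus E op m1 m2 \<longrightarrow> le_plus E op (\<lambda>x. m1 x + m3 x) (\<lambda>x. m2 x + m3 x)"
      by (intro ballI impI) (erule le_plus_transl)
    show "\<forall>m1\<in>jordan E op. \<forall>m2\<in>jordan E op.
        (\<exists>s. is_lub_J E op {m1, m2} s) \<and> (\<exists>t. is_glb_J E op {m1, m2} t)"
      using latt by blast
  qed (rule ded_sup, rule ded_inf)
  have partB: "\<forall>(I :: 'i set) (m :: 'i \<Rightarrow> 'a \<Rightarrow> real) s.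
      I \<noteq> {} \<and> m ` I \<subseteq> jordan E op \<and> bdd_above_J E op (m ` I) \<and> is_lub_J E op (m ` I) s \<longrightarrow>
      (\<forall>x\<in>E. s x = Sup (decomp_sums E op (\<lambda>y. SUP i\<in>I. m i y) x))"
  proof (intro allI impI ballI)
    fix I :: "'i set" and m :: "'i \<Rightarrow> 'a \<Rightarrow> real" and s x
    assume H: "I \<noteq> {} \<and> m ` I \<subseteq> jordan E op \<and> bdd_above_J E op (m ` I) \<and> is_lub_J E op (m ` I) s"
      and x: "x \<in> E"
    have "is_lub_J E op (m ` I) (Dfun E op I m)" by (rule main_lub[OF pea rdp]) (use H in auto)
    then have "s = Dfun E op I m" using H lub_unique by blast
    moreover have "dsup I m = (\<lambda>y. SUP i\<in>I. m i y)" by (rule ext) (simp add: dsup_def)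
    ultimately show "s x = Sup (decomp_sums E op (\<lambda>y. SUP i\<in>I. m i y) x)"
      using x by (simp add: Dfun_def)
  qed
  have partC: "\<forall>(I :: 'i set) (m :: 'i \<Rightarrow> 'a \<Rightarrow> real) t.
      I \<noteq> {} \<and> m ` I \<subseteq> jordan E op \<and> bdd_below_J E op (m ` I) \<and> is_glb_J E op (m ` I) t \<longrightarrow>
      (\<forall>x\<in>E. t x = Inf (decomp_sums E op (\<lambda>y. INF i\<in>I. m i y) x))"
  proof (intro allI impI ballI)
    fix I :: "'i set" and m :: "'i \<Rightarrow> 'a \<Rightarrow> real" and t x
    assume H: "I \<noteq> {} \<and> m ` I \<subseteq> jordan E op \<and> bdd_below_J E op (m ` I) \<and> is_glb_J E op (m ` I) t"
      and x: "x \<in> E"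
    define m' where "m' = (\<lambda>i x. - m i x)"
    have img: "(\<lambda>f x. - f x) ` m ` I = m' ` I" unfolding m'_def by (simp add: image_image)
    from H obtain u where u: "u \<in> jordan E op" "\<forall>f\<in>m ` I. le_plus E op u f" unfolding bdd_below_J_def by auto
    have bd: "bdd_above_J E op (m' ` I)"
      unfolding bdd_above_J_def m'_def using jordan_neg[OF u(1)] u(2)
      by (intro bexI[where x="\<lambda>x. - u x"]) (simp_all add: le_plus_neg)
    have "is_lub_J E op (m' ` I) (Dfun E op I m')"
    proof (rule main_lub[OF pea rdp _ _ bd])
      show "I \<noteq> {}" using H by blast
      show "m' ` I \<subseteq> jordan E op"
      proof
        fix g assume "g \<in> m' ` I"
        then obtain i where i: "i \<in> I" "g = m' i" by blast
        have "m i \<in> jordan E op" using H i(1) by blast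
        then show "g \<in> jordan E op" using jordan_neg i(2) unfolding m'_def by blast
      qed
    qed
    moreover have "is_lub_J E op (m' ` I) (\<lambda>x. - t x)" using glb_neg_lub[of E op "m ` I" t] H img by simp
    ultimately have "(\<lambda>x. - t x) = Dfun E op I m'" using lub_unique by blast
    then have tx: "t x = - Sup (decomp_sums E op (dsup I m') x)"
      using x by (metis (no_types, lifting) Dfun_def minus_minus)
    have "(\<lambda>y. INF i\<in>I. m i y) = (\<lambda>y. - dsup I m' y)"
      by (rule ext) (simp add: dsup_def m'_def Inf_real_def image_image)
    then have "Inf (decomp_sums E op (\<lambda>y. INF i\<in>I. m i y) x) = - Sup (decomp_sums E op (dsup I m') x)"
      by (simp add: decomp_neg Inf_neg)
    then show "t x = Inf (decomp_sums E op (\<lambda>y. INF i\<in>I. m i y) x)" using tx by simp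
  qed
  show ?thesis using partA partB partC by blast
qed

end
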